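(* Let $(d_n)_{n\ge1}$ be a sequence of prime numbers. Then \[ \lambda(\{\mathsf a'_n=d_n\text{ for infinitely many }n\})=\begin{cases}1&\text{if }\sum_{n\ge1}\frac{1}{d_n^2}=\infty,\\ 0&\text{otherwise.}\end{cases} \]
   Context: $I=(0,1]$, $\lambda$ is Lebesgue measure on $I$, and $\mathsf a_n(x)$ denotes the $n$-th continued fraction digit of $x\in I$. $\mathbb P$ is the set of primes. The prime digits are $\mathsf a'_n(x):=\mathsf a_n(x)$ if $\mathsf a_n(x)\in\mathbb P$ and $\mathsf a'_n(x):=0$ otherwise. *)

theory Defs
  imports "HOL-Analysis.Analysis" "HOL-Computational_Algebra.Primes"
begin

text \<open>Gauss map on (0,1]: T x = 1/x - floor(1/x) (with 1/0 = 0 in HOL, T 0 = 0).\<close>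
definition gauss_map :: "real \<Rightarrow> real" where
  "gauss_map x = frac (1 / x)"

definition cf_digit :: "nat \<Rightarrow> real \<Rightarrow> nat" where
  "cf_digit n x = nat \<lfloor>1 / (gauss_map ^^ (n - 1)) x\<rfloor>"

definition prime_digit :: "nat \<Rightarrow> real \<Rightarrow> nat" where
  "prime_digit n x = (if prime (cf_digit n x) then cf_digit n x else 0)"

end

theory Submission
  imports Defs
begin
lemma gm_meas[measurable]: "gauss_map \<in> borel_measurable borel"
  unfolding gauss_map_def frac_def by measurable

lemma one_step:
  fixes H :: "real \<Rightarrow> ennreal" and j :: nat
  assumes j: "j \<ge> 1" and [measurable]: "H \<in> borel_measurable borel"
  shows "(\<integral>\<^sup>+x. H x * indicator {1/(real j+1)..1/real j} x \<partial>lborel)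
       = (\<integral>\<^sup>+y. H (1/(real j+y)) * ennreal (1/(real j+y)^2) * indicator {0..1} y \<partial>lborel)"
proof -
  define g where "g t = 1/(real j+1-t)" for t :: real
  define g' where "g' t = 1/(real j+1-t)^2" for t :: real
  have deriv: "(g has_real_derivative g' t) (at t)" if "t \<in> {0..1}" for t
  proof -
    have ne: "real j + 1 - t \<noteq> 0" using that j by auto
    show ?thesis unfolding g_def g'_def
      by (rule derivative_eq_intros refl | use ne in \<open>auto simp: power2_eq_square field_simps\<close>)+
  qed
  have cont: "continuous_on {0..1} g'" unfolding g'_def
    using j by (intro continuous_intros) auto
  have g0: "g 0 = 1/(real j+1)" and g1: "g 1 = 1/real j" unfolding g_def by auto
  have "(\<integral>\<^sup>+x. H x * indicator {g 0..g 1} x \<partial>lborel)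
     = (\<integral>\<^sup>+t. H (g t) * g' t * indicator {0..1} t \<partial>lborel)"
    by (rule nn_integral_substitution_aux) (use deriv cont in \<open>auto simp: g'_def\<close>)
  also have "\<dots> = ennreal \<bar>-1\<bar> * (\<integral>\<^sup>+y. H (g (1 + (-1)*y)) * g' (1 + (-1)*y) * indicator {0..1} (1 + (-1)*y) \<partial>lborel)"
    by (rule nn_integral_real_affine) (auto simp: g_def g'_def)
  also have "\<dots> = (\<integral>\<^sup>+y. H (g (1 + (-1)*y)) * g' (1 + (-1)*y) * indicator {0..1} (1 + (-1)*y) \<partial>lborel)"
    by simp
  also have "\<dots> = (\<integral>\<^sup>+y. H (1/(real j+y)) * ennreal (1/(real j+y)^2) * indicator {0..1} y \<partial>lborel)"
    by (intro nn_integral_cong) (auto simp: g_def g'_def indicator_def algebra_simps)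
  finally show ?thesis by (simp add: g0 g1)
qed

fun psi :: "nat list \<Rightarrow> real \<Rightarrow> real" where
  "psi [] z = z"
| "psi (j#js) z = 1/(real j + psi js z)"

fun wt :: "nat list \<Rightarrow> real \<Rightarrow> real" where
  "wt [] z = 1"
| "wt (j#js) z = wt js z / (real j + psi js z)^2"

fun cyl :: "nat list \<Rightarrow> real set" where
  "cyl [] = {0<..<1}"
| "cyl (j#js) = {x \<in> {1/(real j+1)..1/real j}. gauss_map x \<in> cyl js}"

lemma gauss_map_inv: "u \<in> {0..<1} \<Longrightarrow> real j + u \<noteq> 0 \<Longrightarrow> gauss_map (1/(real j+u)) = u"
  unfolding gauss_map_def by (simp add: frac_def floor_unique)

lemma gauss_map_one: "gauss_map 1 = 0"
  unfolding gauss_map_def by simp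

lemma cyl_sub: "cyl js \<subseteq> {0<..<1}"
proof (induction js)
  case Nil then show ?case by simp
next
  case (Cons j js)
  show ?case
  proof
    fix x assume x: "x \<in> cyl (j#js)"
    then have j: "j \<ge> 1" by (cases j) auto
    have x1: "x \<in> {1/(real j+1)..1/real j}" and gx: "gauss_map x \<in> cyl js" using x by auto
    have "x > 0" using x1 by (auto intro: less_le_trans[rotated])
    moreover have "x \<le> 1" using x1 j by (auto intro: order.trans[of _ "1/real j"])
    moreover have "x \<noteq> 1" using gx Cons.IH gauss_map_one by auto
    ultimately show "x \<in> {0<..<1}" by auto
  qed
qed

lemma cyl_meas[measurable]: "cyl js \<in> sets borel"
proof (induction js)
  case Nil then show ?case by simp
next
  case (Cons j js)
  have "cyl (j#js) = {1/(real j+1)..1/real j} \<inter> (gauss_map -` cyl js \<inter> space borel)" by auto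
  also have "\<dots> \<in> sets borel" using Cons by (intro sets.Int measurable_sets[OF gm_meas]) auto
  finally show ?case .
qed

lemma psi_meas[measurable]: "psi js \<in> borel_measurable borel"
  by (induction js) (simp_all add: measurable_ident_sets)

lemma psi_in: "z \<in> {0<..<1} \<Longrightarrow> \<forall>j\<in>set js. j \<ge> 1 \<Longrightarrow> psi js z \<in> {0<..<1}"
proof (induction js)
  case Nil then show ?case by simp
next
  case (Cons j js)
  then have p: "psi js z \<in> {0<..<1}" and j: "real j \<ge> 1" by auto
  then show ?case by (auto simp: field_simps)
qed

lemma wt_nonneg: "wt js z \<ge> 0"
  by (induction js) auto

lemma L:
  assumes "\<forall>j\<in>set js. j \<ge> 1" and "F \<in> borel_measurable borel"
  shows "(\<integral>\<^sup>+x. F x * indicator (cyl js) x \<partial>lborel)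
       = (\<integral>\<^sup>+z. F (psi js z) * ennreal (wt js z) * indicator {0<..<1} z \<partial>lborel)"
  using assms
proof (induction js arbitrary: F)
  case Nil then show ?case by simp
next
  case (Cons j js)
  note [measurable] = Cons.prems(2)
  have j: "j \<ge> 1" and js: "\<forall>j\<in>set js. j \<ge> 1" using Cons.prems by auto
  have "(\<integral>\<^sup>+x. F x * indicator (cyl (j#js)) x \<partial>lborel)
      = (\<integral>\<^sup>+x. (F x * indicator (cyl js) (gauss_map x)) * indicator {1/(real j+1)..1/real j} x \<partial>lborel)"
    by (intro nn_integral_cong) (auto simp: indicator_def)
  also have "\<dots> = (\<integral>\<^sup>+y. (F (1/(real j+y)) * indicator (cyl js) (gauss_map (1/(real j+y)))) * ennreal (1/(real j+y)^2) * indicator {0..1} y \<partial>lborel)"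
    by (rule one_step[OF j]) measurable
  also have "\<dots> = (\<integral>\<^sup>+y. (F (1/(real j+y)) * ennreal (1/(real j+y)^2)) * indicator (cyl js) y \<partial>lborel)"
  proof (intro nn_integral_cong)
    fix y :: real
    have c: "cyl js \<subseteq> {0<..<1}" by (rule cyl_sub)
    show "(F (1/(real j+y)) * indicator (cyl js) (gauss_map (1/(real j+y)))) * ennreal (1/(real j+y)^2) * indicator {0..1} y
        = (F (1/(real j+y)) * ennreal (1/(real j+y)^2)) * indicator (cyl js) y"
    proof (cases "y \<in> {0..<1}")
      case True
      then show ?thesis using gauss_map_inv[OF True, of j] j c by (auto simp: indicator_def)
    next
      case False
      then have "y \<notin> cyl js" using c by auto
      moreover have "y = 1 \<Longrightarrow> gauss_map (1/(real j+y)) \<notin> cyl js"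
        using gauss_map_inv[of 0 "Suc j"] c by (auto simp: add.commute)
      ultimately show ?thesis using False by (auto simp: indicator_def)
    qed
  qed
  also have "\<dots> = (\<integral>\<^sup>+z. (F (1/(real j+psi js z)) * ennreal (1/(real j+psi js z)^2)) * ennreal (wt js z) * indicator {0<..<1} z \<partial>lborel)"
    by (rule Cons.IH[OF js]) measurable
  also have "\<dots> = (\<integral>\<^sup>+z. F (psi (j#js) z) * ennreal (wt (j#js) z) * indicator {0<..<1} z \<partial>lborel)"
    by (intro nn_integral_cong) (simp add: divide_inverse ennreal_mult wt_nonneg ac_simps)
  finally show ?case .
qed


lemma mobius:
  assumes "\<forall>j\<in>set js. j \<ge> 1"
  shows "\<exists>p p' q q'. 0\<le>p \<and> 0\<le>p' \<and> 0<q \<and> 0\<le>q' \<and> q'\<le>q \<and> p' \<le> p+(q-q') \<and>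
     (\<forall>z\<in>{0<..<1}. psi js z = (p+p'*z)/(q+q'*z) \<and> wt js z = 1/(q+q'*z)^2)"
  using assms
proof (induction js)
  case Nil
  show ?case by (rule exI[of _ 0], rule exI[of _ 1], rule exI[of _ 1], rule exI[of _ 0]) auto
next
  case (Cons j js)
  then have j: "real j \<ge> 1" and "\<forall>j\<in>set js. j \<ge> 1" by auto
  then obtain p p' q q' where h: "0\<le>p" "0\<le>p'" "0<q" "0\<le>q'" "q'\<le>q" "p' \<le> p+(q-q')"
    and e: "\<forall>z\<in>{0<..<1}. psi js z = (p+p'*z)/(q+q'*z) \<and> wt js z = 1/(q+q'*z)^2"
    using Cons.IH by blast
  show ?case
  proof (rule exI[of _ q], rule exI[of _ q'], rule exI[of _ "real j*q+p"], rule exI[of _ "real j*q'+p'"], intro conjI ballI)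
    show "0 \<le> q" "0 \<le> q'" using h by auto
    show "0 < real j * q + p" using h j by (smt (verit) mult_pos_pos)
    show "0 \<le> real j * q' + p'" using h j by simp
    have "(real j - 1) * q' \<le> (real j - 1) * q" using h j by (intro mult_left_mono) auto
    then show "real j * q' + p' \<le> real j * q + p" using h by (simp add: algebra_simps)
    then show "q' \<le> q + (real j * q + p - (real j * q' + p'))" using h by simp
  next
    fix z :: real assume z: "z \<in> {0<..<1}"
    have Q: "q + q'*z > 0" using h z by (smt (verit) mult_nonneg_nonneg greaterThanLessThan_iff)
    have P: "p + p'*z \<ge> 0" using h z by simp
    have D: "real j * (q + q'*z) + (p + p'*z) > 0" using Q P j by (smt (verit) mult_pos_pos)
    have ps: "psi js z = (p+p'*z)/(q+q'*z)" and ws: "wt js z = 1/(q+q'*z)^2" using e z by auto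
    define D where "D = real j * (q + q'*z) + (p + p'*z)"
    have jp: "real j + psi js z = D / (q+q'*z)"
      using Q ps unfolding D_def by (simp add: field_simps)
    have Dq: "D = real j * q + p + (real j * q' + p') * z" unfolding D_def by (simp add: algebra_simps)
    have "psi (j#js) z = (q + q'*z) / D" using jp Q D unfolding D_def by simp
    then show "psi (j#js) z = (q + q'*z) / (real j * q + p + (real j * q' + p') * z)" using Dq by simp
    have "wt (j#js) z = (1/(q+q'*z)^2) / (D / (q+q'*z))^2" using jp ws by simp
    also have "\<dots> = 1 / D^2" using Q D unfolding D_def by (simp add: power_divide)
    finally show "wt (j#js) z = 1 / (real j * q + p + (real j * q' + p') * z)^2" using Dq by simp
  qed
qed

lemma wt_bounds:
  assumes "\<forall>j\<in>set js. j \<ge> 1"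
  shows "\<exists>c>0. \<forall>z\<in>{0<..<1}. c/4 \<le> wt js z \<and> wt js z \<le> c"
proof -
  obtain p p' q q' where H: "0\<le>p \<and> 0\<le>p' \<and> 0<q \<and> 0\<le>q' \<and> q'\<le>q \<and> p' \<le> p+(q-q') \<and>
     (\<forall>z\<in>{0<..<1}. psi js z = (p+p'*z)/(q+q'*z) \<and> wt js z = 1/(q+q'*z)^2)"
    using mobius[OF assms] by (elim exE) (rule that)
  have h: "0\<le>p" "0\<le>p'" "0<q" "0\<le>q'" "q'\<le>q" using H by simp_all
  have e: "\<forall>z\<in>{0<..<1}. wt js z = 1/(q+q'*z)^2" using H by simp
  show ?thesis
  proof (rule exI[of _ "1/q^2"], intro conjI ballI)
    show "1/q^2 > 0" using h by simp
    fix z :: real assume z: "z \<in> {0<..<1}"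
    have z0: "0 \<le> z" "z \<le> 1" using z by auto
    have qz: "0 \<le> q'*z" using h(4) z0(1) by (rule mult_nonneg_nonneg)
    have qz1: "q'*z \<le> q'*1" using z0(2) h(4) by (rule mult_left_mono)
    have a: "q \<le> q+q'*z" using qz by linarith
    have b: "q+q'*z \<le> 2*q" using qz1 h(5) by linarith
    have q0: "0 \<le> q" using h(3) by linarith
    have s1: "q^2 \<le> (q+q'*z)^2" using power_mono[OF a q0] .
    have s2: "(q+q'*z)^2 \<le> (2*q)^2" by (rule power_mono[OF b]) (use q0 qz in linarith)
    have p1: "0 < q^2" using h(3) by simp
    have p2: "0 < (q+q'*z)^2" using h(3) qz by simp
    have "1/(q+q'*z)^2 \<le> 1/q^2" using s1 p1 p2 by (simp add: frac_le)
    then show "wt js z \<le> 1/q^2" using e z by simp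
    have "1/(2*q)^2 \<le> 1/(q+q'*z)^2" using s2 p2 by (simp add: frac_le)
    then show "1/q^2/4 \<le> wt js z" using e z by (simp add: power_mult_distrib)
  qed
qed

lemma psi_inv:
  assumes "z \<in> {0<..<1}" "\<forall>j\<in>set js. j \<ge> 1"
  shows "(gauss_map ^^ length js) (psi js z) = z"
  using assms
proof (induction js)
  case Nil then show ?case by simp
next
  case (Cons j js)
  have p: "psi js z \<in> {0<..<1}" using psi_in Cons.prems by auto
  have "gauss_map (psi (j#js) z) = psi js z"
    using gauss_map_inv[of "psi js z" j] p by auto
  have "(gauss_map ^^ length (j#js)) (psi (j#js) z) = (gauss_map ^^ length js) (gauss_map (psi (j#js) z))"
    by (simp add: funpow_Suc_right del: funpow.simps)
  then show ?case using Cons p \<open>gauss_map (psi (j#js) z) = psi js z\<close> by simp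
qed

lemma cylB_aux: assumes [measurable]: "B \<in> sets borel"
  shows "cyl js \<inter> {x. (gauss_map ^^ n) x \<in> B} \<in> sets lborel"
  by measurable

lemma e4: "c \<ge> 0 \<Longrightarrow> ennreal c = 4 * ennreal (c/4)"
proof -
  assume c: "c \<ge> 0"
  have "ennreal c = ennreal (4 * (c/4))" by simp
  also have "\<dots> = ennreal 4 * ennreal (c/4)" using c by (intro ennreal_mult) auto
  finally show ?thesis by simp
qed

lemma cylB:
  assumes "\<forall>j\<in>set js. j \<ge> 1" and [measurable]: "B \<in> sets borel"
  shows "emeasure lborel (cyl js \<inter> {x. (gauss_map ^^ length js) x \<in> B})
       = (\<integral>\<^sup>+z. ennreal (wt js z) * indicator ({0<..<1} \<inter> B) z \<partial>lborel)"
proof -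
  have "emeasure lborel (cyl js \<inter> {x. (gauss_map ^^ length js) x \<in> B})
     = (\<integral>\<^sup>+x. indicator {x. (gauss_map ^^ length js) x \<in> B} x * indicator (cyl js) x \<partial>lborel)"
    unfolding nn_integral_indicator[symmetric, OF cylB_aux[OF assms(2)]]
    by (intro nn_integral_cong) (auto simp: indicator_def)
  also have "\<dots> = (\<integral>\<^sup>+z. indicator {x. (gauss_map ^^ length js) x \<in> B} (psi js z) * ennreal (wt js z) * indicator {0<..<1} z \<partial>lborel)"
    by (rule L[OF assms(1)]) measurable
  also have "\<dots> = (\<integral>\<^sup>+z. ennreal (wt js z) * indicator ({0<..<1} \<inter> B) z \<partial>lborel)"
    using psi_inv[OF _ assms(1)] by (intro nn_integral_cong) (auto simp: indicator_def)
  finally show ?thesis .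
qed

lemma cyl_bounds:
  assumes "\<forall>j\<in>set js. j \<ge> 1" and [measurable]: "B \<in> sets borel"
  shows "emeasure lborel (cyl js \<inter> {x. (gauss_map ^^ length js) x \<in> B})
           \<le> 4 * emeasure lborel (cyl js) * emeasure lborel ({0<..<1} \<inter> B)"
    and "emeasure lborel (cyl js) * emeasure lborel ({0<..<1} \<inter> B)
           \<le> 4 * emeasure lborel (cyl js \<inter> {x. (gauss_map ^^ length js) x \<in> B})"
proof -
  obtain c where c: "c > 0" "\<And>z. z\<in>{0<..<1} \<Longrightarrow> c/4 \<le> wt js z \<and> wt js z \<le> c"
    using wt_bounds[OF assms(1)] by blast
  have up: "emeasure lborel (cyl js \<inter> {x. (gauss_map ^^ length js) x \<in> C}) \<le> ennreal c * emeasure lborel ({0<..<1} \<inter> C)"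
    and lo: "ennreal (c/4) * emeasure lborel ({0<..<1} \<inter> C) \<le> emeasure lborel (cyl js \<inter> {x. (gauss_map ^^ length js) x \<in> C})"
    if [measurable]: "C \<in> sets borel" for C
  proof -
    have "emeasure lborel (cyl js \<inter> {x. (gauss_map ^^ length js) x \<in> C}) = (\<integral>\<^sup>+z. ennreal (wt js z) * indicator ({0<..<1} \<inter> C) z \<partial>lborel)"
      by (rule cylB[OF assms(1) that])
    also have "\<dots> \<le> (\<integral>\<^sup>+z. ennreal c * indicator ({0<..<1} \<inter> C) z \<partial>lborel)"
      using c by (intro nn_integral_mono) (auto simp: indicator_def intro!: ennreal_leI)
    also have "\<dots> = ennreal c * emeasure lborel ({0<..<1} \<inter> C)"
      by (rule nn_integral_cmult_indicator) measurable
    finally show "emeasure lborel (cyl js \<inter> {x. (gauss_map ^^ length js) x \<in> C}) \<le> ennreal c * emeasure lborel ({0<..<1} \<inter> C)" .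
    have "ennreal (c/4) * emeasure lborel ({0<..<1} \<inter> C) = (\<integral>\<^sup>+z. ennreal (c/4) * indicator ({0<..<1} \<inter> C) z \<partial>lborel)"
      by (rule nn_integral_cmult_indicator[symmetric]) measurable
    also have "\<dots> \<le> (\<integral>\<^sup>+z. ennreal (wt js z) * indicator ({0<..<1} \<inter> C) z \<partial>lborel)"
      using c by (intro nn_integral_mono) (auto simp: indicator_def intro!: ennreal_leI)
    also have "\<dots> = emeasure lborel (cyl js \<inter> {x. (gauss_map ^^ length js) x \<in> C})"
      by (rule cylB[OF assms(1) that, symmetric])
    finally show "ennreal (c/4) * emeasure lborel ({0<..<1} \<inter> C) \<le> emeasure lborel (cyl js \<inter> {x. (gauss_map ^^ length js) x \<in> C})" .
  qed
  have U: "cyl js \<inter> {x. (gauss_map ^^ length js) x \<in> UNIV} = cyl js" by auto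
  have one: "emeasure lborel (({0<..<1}::real set) \<inter> UNIV) = 1" by simp
  have cU: "ennreal c \<le> 4 * emeasure lborel (cyl js)"
  proof -
    have "ennreal c = 4 * ennreal (c/4)" using c by (intro e4) auto
    also have "\<dots> \<le> 4 * emeasure lborel (cyl js)" using lo[of UNIV] U one by (intro mult_left_mono) auto
    finally show ?thesis .
  qed
  have cL: "emeasure lborel (cyl js) \<le> ennreal c" using up[of UNIV] U one by simp
  show "emeasure lborel (cyl js \<inter> {x. (gauss_map ^^ length js) x \<in> B})
           \<le> 4 * emeasure lborel (cyl js) * emeasure lborel ({0<..<1} \<inter> B)"
    using order.trans[OF up[OF assms(2)] mult_right_mono[OF cU]] by simp
  have "emeasure lborel (cyl js) * emeasure lborel ({0<..<1} \<inter> B) \<le> ennreal c * emeasure lborel ({0<..<1} \<inter> B)"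
    using cL by (intro mult_right_mono) auto
  also have "\<dots> = 4 * (ennreal (c/4) * emeasure lborel ({0<..<1} \<inter> B))"
    using e4[of c] c by (simp add: mult.assoc)
  also have "\<dots> \<le> 4 * emeasure lborel (cyl js \<inter> {x. (gauss_map ^^ length js) x \<in> B})"
    using lo[OF assms(2)] by (intro mult_left_mono) auto
  finally show "emeasure lborel (cyl js) * emeasure lborel ({0<..<1} \<inter> B)
           \<le> 4 * emeasure lborel (cyl js \<inter> {x. (gauss_map ^^ length js) x \<in> B})" .
qed


definition G :: "real set" where "G = {x. \<forall>i. (gauss_map ^^ i) x \<in> {0<..<1}}"
definition D :: "nat \<Rightarrow> real \<Rightarrow> nat list" where "D n x = map (\<lambda>i. cf_digit (Suc i) x) [0..<n]"

lemma funpow_meas[measurable]: "(gauss_map ^^ i) \<in> borel_measurable borel"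
proof (induction i)
  case 0 then show ?case by simp
next
  case (Suc i)
  have "(gauss_map ^^ Suc i) = gauss_map \<circ> (gauss_map ^^ i)" by simp
  then show ?case using Suc by (simp add: measurable_comp[OF Suc gm_meas])
qed

lemma G_meas[measurable]: "G \<in> sets borel"
proof -
  have "G = (\<Inter>i\<in>UNIV. (gauss_map ^^ i) -` {0<..<1} \<inter> space borel)" by (auto simp: G_def)
  also have "\<dots> \<in> sets borel"
    by (intro sets.countable_INT'' measurable_sets[OF funpow_meas]) auto
  finally show ?thesis .
qed

lemma G_sub: "G \<subseteq> {0<..<1}"
  unfolding G_def by (auto dest: spec[of _ 0])

lemma G_shift: assumes "x \<in> G" shows "gauss_map x \<in> G"
  unfolding G_def mem_Collect_eq
proof
  fix i
  have e: "(gauss_map ^^ i) (gauss_map x) = (gauss_map ^^ Suc i) x"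
    by (simp only: funpow_Suc_right comp_def)
  have "(gauss_map ^^ Suc i) x \<in> {0<..<1}" using assms unfolding G_def by blast
  then show "(gauss_map ^^ i) (gauss_map x) \<in> {0<..<1}" using e by simp
qed

lemma irr_G:
  assumes x: "x \<in> {0<..1}" "x \<notin> \<rat>"
  shows "x \<in> G"
proof -
  have "(gauss_map ^^ i) x \<notin> \<rat> \<and> (gauss_map ^^ i) x \<in> {0<..<1}" for i
  proof (induction i)
    case 0
    have "x \<noteq> 1" using x by auto
    then show ?case using x by auto
  next
    case (Suc i)
    define y where "y = (gauss_map ^^ i) x"
    have y: "y \<notin> \<rat>" "y \<in> {0<..<1}" using Suc y_def by auto
    have iy: "1/y \<notin> \<rat>"
    proof
      assume "1/y \<in> \<rat>"
      then have "inverse (1/y) \<in> \<rat>" by (rule Rats_inverse)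
      then show False using y by simp
    qed
    have gy: "gauss_map y = 1/y - of_int \<lfloor>1/y\<rfloor>" unfolding gauss_map_def frac_def by simp
    have ng: "gauss_map y \<notin> \<rat>"
    proof
      assume "gauss_map y \<in> \<rat>"
      then have "gauss_map y + of_int \<lfloor>1/y\<rfloor> \<in> \<rat>" by simp
      then show False using iy gy by simp
    qed
    have "gauss_map y \<noteq> 0" using ng by auto
    moreover have "gauss_map y \<ge> 0" "gauss_map y < 1" unfolding gauss_map_def by (auto simp: frac_lt_1)
    ultimately show ?case using ng by (simp add: y_def)
  qed
  then show ?thesis unfolding G_def by auto
qed

lemma G_null: "{0<..1} - G \<in> null_sets lborel"
proof (rule null_sets_subset)
  show "\<rat> \<in> null_sets lborel" by (rule countable_imp_null_set_lborel[OF countable_rat])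
  show "{0<..1} - G \<in> sets lborel" by measurable
  show "{0<..1} - G \<subseteq> \<rat>"
  proof
    fix x assume "x \<in> {0<..1} - G" then show "x \<in> \<rat>" using irr_G by blast
  qed
qed

lemma cf_digit_shift: "cf_digit (Suc (Suc i)) x = cf_digit (Suc i) (gauss_map x)"
  unfolding cf_digit_def by (simp add: funpow_Suc_right del: funpow.simps)

lemma cf_digit_T: "cf_digit (Suc n) x = cf_digit 1 ((gauss_map ^^ n) x)"
  unfolding cf_digit_def by simp

lemma D_Suc: "D (Suc n) x = cf_digit 1 x # D n (gauss_map x)"
  unfolding D_def by (simp add: upt_conv_Cons map_Suc_upt[symmetric] cf_digit_shift del: upt_Suc)

lemma digit1:
  assumes x: "x \<in> {0<..<1}" and gx: "gauss_map x \<in> {0<..<1}"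
  shows "x \<in> {1/(real j+1)..1/real j} \<longleftrightarrow> cf_digit 1 x = j"
proof -
  define y where "y = 1/x"
  have y1: "y > 1" using x unfolding y_def by auto
  have fy: "frac y \<noteq> 0" using gx unfolding gauss_map_def y_def by auto
  have xy: "x = 1/y" unfolding y_def by simp
  have cd: "cf_digit 1 x = nat \<lfloor>y\<rfloor>" unfolding cf_digit_def y_def by simp
  show ?thesis
  proof
    assume a: "x \<in> {1/(real j+1)..1/real j}"
    then have j: "j \<ge> 1" by (cases j) auto
    have "y \<le> real j + 1" using a y1 unfolding xy by (auto simp: field_simps)
    moreover have "y \<ge> real j" using a y1 j unfolding xy by (auto simp: field_simps)
    moreover have "y \<noteq> real j + 1"
    proof
      assume "y = real j + 1"
      then have "y \<in> \<int>" by simp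
      then show False using fy by (simp add: frac_eq_0_iff)
    qed
    ultimately have "\<lfloor>y\<rfloor> = int j" by (intro floor_unique) auto
    then show "cf_digit 1 x = j" using cd by simp
  next
    assume "cf_digit 1 x = j"
    moreover have fl: "\<lfloor>y\<rfloor> \<ge> 0" using y1 by (simp add: le_floor_iff)
    ultimately have "\<lfloor>y\<rfloor> = int j" using cd by (metis int_nat_eq)
    then have "real j \<le> y" "y < real j + 1" by linarith+
    moreover have "real j \<ge> 1"
    proof -
      have "\<lfloor>y\<rfloor> \<ge> 1" using y1 by (simp add: le_floor_iff)
      then show ?thesis using \<open>\<lfloor>y\<rfloor> = int j\<close> by simp
    qed
    ultimately show "x \<in> {1/(real j+1)..1/real j}" unfolding xy using y1 by (auto simp: field_simps)
  qed
qed

lemma cyl_iff: "x \<in> G \<Longrightarrow> x \<in> cyl js \<longleftrightarrow> D (length js) x = js"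
proof (induction js arbitrary: x)
  case Nil then show ?case using G_sub by (auto simp: D_def)
next
  case (Cons j js)
  have gG: "gauss_map x \<in> G" using G_shift[OF Cons.prems] .
  have x: "x \<in> {0<..<1}" using Cons.prems G_sub by blast
  have gx: "gauss_map x \<in> {0<..<1}" using gG G_sub by blast
  show ?case using digit1[OF x gx, of j] Cons.IH[OF gG] by (auto simp: D_Suc)
qed

lemma D_pos: "x \<in> G \<Longrightarrow> \<forall>j\<in>set (D n x). j \<ge> 1"
proof -
  assume x: "x \<in> G"
  have "cf_digit (Suc i) x \<ge> 1" for i
  proof -
    have "(gauss_map ^^ i) x \<in> {0<..<1}" using x unfolding G_def by auto
    then have "1/(gauss_map ^^ i) x > 1" by auto
    then have f: "\<lfloor>1/(gauss_map ^^ i) x\<rfloor> \<ge> 1" by (simp add: le_floor_iff)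
    have "cf_digit (Suc i) x = nat \<lfloor>1/(gauss_map ^^ i) x\<rfloor>" unfolding cf_digit_def by simp
    moreover have "nat \<lfloor>1/(gauss_map ^^ i) x\<rfloor> \<ge> nat 1" using f by (rule nat_mono)
    ultimately show ?thesis by simp
  qed
  then show ?thesis unfolding D_def by auto
qed

lemma length_D[simp]: "length (D n x) = n" unfolding D_def by simp


lemma cylG: "A \<subseteq> cyl js \<Longrightarrow> A \<in> sets borel \<Longrightarrow> emeasure lborel (A \<inter> G) = emeasure lborel A"
proof -
  assume A: "A \<subseteq> cyl js" "A \<in> sets borel"
  have "A \<inter> G = A - ({0<..1} - G)" using A(1) cyl_sub[of js] by auto
  then show ?thesis using emeasure_Diff_null_set[OF G_null, of A] A(2) by simp
qed

lemma K:
  fixes S :: "nat list set" and n :: nat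
  assumes [measurable]: "B \<in> sets borel"
  defines "A \<equiv> {x \<in> G. D n x \<in> S}" and "AB \<equiv> {x \<in> G. D n x \<in> S \<and> (gauss_map ^^ n) x \<in> B}"
  shows "emeasure lborel AB \<le> 4 * emeasure lborel ({0<..<1} \<inter> B) * emeasure lborel A"
    and "emeasure lborel ({0<..<1} \<inter> B) * emeasure lborel A \<le> 4 * emeasure lborel AB"
proof -
  define I where "I = {js \<in> S. length js = n \<and> (\<forall>j\<in>set js. j \<ge> 1)}"
  have cI: "countable I"
    by (rule countable_subset[of _ "lists UNIV"]) (auto simp: I_def intro: countable_lists)
  define X where "X js = cyl js \<inter> {x. (gauss_map ^^ n) x \<in> B} \<inter> G" for js
  define Y where "Y js = cyl js \<inter> G" for js
  have XM[measurable]: "X js \<in> sets borel" for js unfolding X_def by measurable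
  have YM[measurable]: "Y js \<in> sets borel" for js unfolding Y_def by measurable
  have AU: "A = \<Union>(Y ` I)"
  proof
    show "A \<subseteq> \<Union>(Y ` I)"
    proof
      fix x assume "x \<in> A"
      then have x: "x \<in> G" "D n x \<in> S" unfolding A_def by auto
      then have "D n x \<in> I" "x \<in> Y (D n x)" using D_pos[OF x(1)] cyl_iff[OF x(1), of "D n x"]
        unfolding I_def Y_def by auto
      then show "x \<in> \<Union>(Y ` I)" by blast
    qed
    show "\<Union>(Y ` I) \<subseteq> A" unfolding Y_def I_def A_def using cyl_iff by fastforce
  qed
  have ABU: "AB = \<Union>(X ` I)"
  proof
    show "AB \<subseteq> \<Union>(X ` I)"
    proof
      fix x assume "x \<in> AB"
      then have x: "x \<in> G" "D n x \<in> S" "(gauss_map ^^ n) x \<in> B" unfolding AB_def by auto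
      then have "D n x \<in> I" "x \<in> X (D n x)" using D_pos[OF x(1)] cyl_iff[OF x(1), of "D n x"]
        unfolding I_def X_def by auto
      then show "x \<in> \<Union>(X ` I)" by blast
    qed
    show "\<Union>(X ` I) \<subseteq> AB" unfolding X_def I_def AB_def using cyl_iff by fastforce
  qed
  have dY: "disjoint_family_on Y I"
    unfolding disjoint_family_on_def Y_def I_def using cyl_iff by fastforce
  have dX: "disjoint_family_on X I"
    unfolding disjoint_family_on_def X_def I_def using cyl_iff by fastforce
  have eA: "emeasure lborel A = (\<integral>\<^sup>+js. emeasure lborel (Y js) \<partial>count_space I)"
    unfolding AU by (rule emeasure_UN_countable[OF _ cI dY]) simp
  have eAB: "emeasure lborel AB = (\<integral>\<^sup>+js. emeasure lborel (X js) \<partial>count_space I)"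
    unfolding ABU by (rule emeasure_UN_countable[OF _ cI dX]) simp
  have Xe: "emeasure lborel (X js) = emeasure lborel (cyl js \<inter> {x. (gauss_map ^^ length js) x \<in> B})"
    if "js \<in> I" for js
  proof -
    have "X js = (cyl js \<inter> {x. (gauss_map ^^ length js) x \<in> B}) \<inter> G" using that unfolding X_def I_def by auto
    then show ?thesis by (simp add: cylG[of _ js])
  qed
  have Ye: "emeasure lborel (Y js) = emeasure lborel (cyl js)" for js
    unfolding Y_def by (rule cylG) auto
  let ?b = "emeasure lborel ({0<..<1} \<inter> B)"
  have "emeasure lborel AB \<le> (\<integral>\<^sup>+js. (4 * ?b) * emeasure lborel (Y js) \<partial>count_space I)"
    unfolding eAB
  proof (intro nn_integral_mono)
    fix js assume "js \<in> space (count_space I)"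
    then have js: "js \<in> I" by simp
    then have p: "\<forall>j\<in>set js. j \<ge> 1" unfolding I_def by auto
    show "emeasure lborel (X js) \<le> (4 * ?b) * emeasure lborel (Y js)"
      using cyl_bounds(1)[OF p assms(1)] Xe[OF js] Ye[of js] by (simp add: ac_simps)
  qed
  also have "\<dots> = (4 * ?b) * emeasure lborel A" unfolding eA by (rule nn_integral_cmult) simp
  finally show "emeasure lborel AB \<le> 4 * ?b * emeasure lborel A" .
  have "?b * emeasure lborel A = (\<integral>\<^sup>+js. ?b * emeasure lborel (Y js) \<partial>count_space I)"
    unfolding eA by (rule nn_integral_cmult[symmetric]) simp
  also have "\<dots> \<le> (\<integral>\<^sup>+js. 4 * emeasure lborel (X js) \<partial>count_space I)"
  proof (intro nn_integral_mono)
    fix js assume "js \<in> space (count_space I)"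
    then have js: "js \<in> I" by simp
    then have p: "\<forall>j\<in>set js. j \<ge> 1" unfolding I_def by auto
    show "?b * emeasure lborel (Y js) \<le> 4 * emeasure lborel (X js)"
      using cyl_bounds(2)[OF p assms(1)] Xe[OF js] Ye[of js] by (simp add: ac_simps)
  qed
  also have "\<dots> = 4 * emeasure lborel AB" unfolding eAB by (rule nn_integral_cmult) simp
  finally show "?b * emeasure lborel A \<le> 4 * emeasure lborel AB" .
qed


lemma cfd_pred[measurable]: "Measurable.pred borel (\<lambda>x. cf_digit n x = k)"
  unfolding cf_digit_def by measurable

lemma fin: "(X::real set) \<subseteq> {0<..<1} \<Longrightarrow> emeasure lborel X = ennreal (measure lborel X)"
proof (rule emeasure_eq_ennreal_measure)
  assume "X \<subseteq> {0<..<1}"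
  then have "emeasure lborel X \<le> emeasure lborel ({0<..<1}::real set)" by (intro emeasure_mono) auto
  then show "emeasure lborel X \<noteq> top" by (auto simp: top_unique)
qed

lemma enn1: "0 \<le> b \<Longrightarrow> 0 \<le> a \<Longrightarrow> ennreal x \<le> 4 * ennreal b * ennreal a \<Longrightarrow> x \<le> 4*b*a"
proof -
  assume h: "0 \<le> b" "0 \<le> a" "ennreal x \<le> 4 * ennreal b * ennreal a"
  have "ennreal (4*b*a) = ennreal (4*b) * ennreal a" using h by (intro ennreal_mult) auto
  also have "\<dots> = 4 * ennreal b * ennreal a" using h by (simp add: ennreal_mult)
  finally show ?thesis using h by (metis ennreal_le_iff mult_nonneg_nonneg zero_le_numeral)
qed

lemma enn2: "0 \<le> b \<Longrightarrow> 0 \<le> a \<Longrightarrow> 0 \<le> c \<Longrightarrow> ennreal b * ennreal a \<le> 4 * ennreal c \<Longrightarrow> b*a \<le> 4*c"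
proof -
  assume h: "0 \<le> b" "0 \<le> a" "0 \<le> c" "ennreal b * ennreal a \<le> 4 * ennreal c"
  have "ennreal (b*a) = ennreal b * ennreal a" using h by (intro ennreal_mult) auto
  moreover have "ennreal (4*c) = 4 * ennreal c" using h by (simp add: ennreal_mult)
  ultimately show ?thesis using h by (metis ennreal_le_iff mult_nonneg_nonneg zero_le_numeral)
qed

lemma Kreal:
  fixes S :: "nat list set" and n :: nat
  assumes [measurable]: "B \<in> sets borel"
  defines "A \<equiv> {x \<in> G. D n x \<in> S}" and "AB \<equiv> {x \<in> G. D n x \<in> S \<and> (gauss_map ^^ n) x \<in> B}"
  shows "measure lborel AB \<le> 4 * measure lborel ({0<..<1} \<inter> B) * measure lborel A"
    and "measure lborel ({0<..<1} \<inter> B) * measure lborel A \<le> 4 * measure lborel AB"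
proof -
  have sA: "A \<subseteq> {0<..<1}" and sAB: "AB \<subseteq> {0<..<1}" unfolding A_def AB_def using G_sub by auto
  have fB: "emeasure lborel ({0<..<1} \<inter> B) = ennreal (measure lborel ({0<..<1} \<inter> B))" by (rule fin) auto
  note f = fin[OF sA] fin[OF sAB] fB
  have k1: "emeasure lborel AB \<le> 4 * emeasure lborel ({0<..<1} \<inter> B) * emeasure lborel A"
    and k2: "emeasure lborel ({0<..<1} \<inter> B) * emeasure lborel A \<le> 4 * emeasure lborel AB"
    unfolding A_def AB_def by (rule K[OF assms(1)])+
  show "measure lborel AB \<le> 4 * measure lborel ({0<..<1} \<inter> B) * measure lborel A"
    using k1 unfolding f by (intro enn1) auto
  show "measure lborel ({0<..<1} \<inter> B) * measure lborel A \<le> 4 * measure lborel AB"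
    using k2 unfolding f by (intro enn2) auto
qed

lemma Bd_bounds:
  fixes d :: nat assumes d: "d \<ge> 1"
  shows "1/(2*real d^2) \<le> measure lborel ({0<..<1} \<inter> {y. cf_digit 1 y = d})"
    and "measure lborel ({0<..<1} \<inter> {y. cf_digit 1 y = d}) \<le> 1/real d^2"
proof -
  let ?B = "{0<..<1} \<inter> {y. cf_digit 1 y = d}"
  have dr: "real d \<ge> 1" using d by simp
  have s1: "{1/(real d+1)<..<1/real d} \<subseteq> ?B"
  proof
    fix y assume y: "y \<in> {1/(real d+1)<..<1/real d}"
    have yp: "y > 0" using y dr by (auto intro: less_trans[rotated])
    have "1/real d \<le> 1" using dr by simp
    then have "y < 1" using y by auto
    have "real d < 1/y" "1/y < real d + 1" using y yp dr by (auto simp: field_simps)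
    then have "\<lfloor>1/y\<rfloor> = int d" by (intro floor_unique) auto
    then show "y \<in> ?B" using yp \<open>y < 1\<close> unfolding cf_digit_def by simp
  qed
  have s2: "?B \<subseteq> {1/(real d+1)..1/real d}"
  proof
    fix y assume y: "y \<in> ?B"
    then have yp: "y > 0" and "nat \<lfloor>1/y\<rfloor> = d" unfolding cf_digit_def by auto
    then have "\<lfloor>1/y\<rfloor> = int d" using d by linarith
    then have "real d \<le> 1/y" "1/y < real d + 1" by linarith+
    then show "y \<in> {1/(real d+1)..1/real d}" using yp dr by (auto simp: field_simps)
  qed
  have fB: "emeasure lborel ?B = ennreal (measure lborel ?B)" by (rule fin) auto
  have "ennreal (1/real d - 1/(real d+1)) = emeasure lborel {1/(real d+1)<..<1/real d}"
    using dr by (subst emeasure_lborel_Ioo) (auto simp: field_simps)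
  also have "\<dots> \<le> emeasure lborel ?B" using s1 by (intro emeasure_mono) auto
  finally have l: "1/real d - 1/(real d+1) \<le> measure lborel ?B" unfolding fB
    by (simp add: ennreal_le_iff)
  have "emeasure lborel ?B \<le> emeasure lborel {1/(real d+1)..1/real d}" using s2 by (intro emeasure_mono) auto
  also have "\<dots> = ennreal (1/real d - 1/(real d+1))"
    using dr by (subst emeasure_lborel_Icc) (auto simp: field_simps)
  finally have u: "measure lborel ?B \<le> 1/real d - 1/(real d+1)" unfolding fB
    using dr by (subst (asm) ennreal_le_iff) (auto simp: field_simps)
  have e: "1/real d - 1/(real d+1) = 1/(real d * (real d + 1))" using dr by (simp add: field_simps)
  have "1/(2*real d^2) \<le> 1/(real d * (real d + 1))"
    using dr by (intro divide_left_mono) (auto simp: power2_eq_square)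
  then show "1/(2*real d^2) \<le> measure lborel ?B" using l e by linarith
  have "1/(real d * (real d + 1)) \<le> 1/real d^2"
    using dr by (intro divide_left_mono) (auto simp: power2_eq_square)
  then show "measure lborel ?B \<le> 1/real d^2" using u e by linarith
qed


lemma meas_mono01: "X \<subseteq> Y \<Longrightarrow> Y \<subseteq> {0<..<1} \<Longrightarrow> Y \<in> sets borel \<Longrightarrow> measure lborel X \<le> measure lborel (Y::real set)"
proof -
  assume h: "X \<subseteq> Y" "Y \<subseteq> {0<..<1}" "Y \<in> sets borel"
  have "emeasure lborel X \<le> emeasure lborel Y" using h by (intro emeasure_mono) auto
  then show ?thesis using fin[of X] fin[of Y] h by (simp add: ennreal_le_iff)
qed

lemma meas_le1: "X \<subseteq> {0<..<1} \<Longrightarrow> measure lborel (X::real set) \<le> 1"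
  using meas_mono01[of X "{0<..<1}"] by simp

lemma D_nth: "k < n \<Longrightarrow> D n x ! k = cf_digit (Suc k) x"
  unfolding D_def by simp

lemma Fset_eq: "{x \<in> G. cf_digit (Suc k) x = e} = {x \<in> G. D k x \<in> UNIV \<and> (gauss_map ^^ k) x \<in> {y. cf_digit 1 y = e}}"
  using cf_digit_T[of k] by auto

lemma step_bound:
  fixes d :: "nat \<Rightarrow> nat" and m N :: nat
  assumes dp: "d (Suc N) \<ge> 1" and mN: "m \<le> N"
  defines "A \<equiv> \<lambda>N. {x \<in> G. \<forall>k\<in>{m..<N}. cf_digit (Suc k) x \<noteq> d (Suc k)}"
  shows "measure lborel (A (Suc N)) \<le> measure lborel (A N) * (1 - 1/(8*real (d (Suc N))^2))"
proof -
  define S where "S = {js :: nat list. \<forall>k\<in>{m..<N}. js ! k \<noteq> d (Suc k)}"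
  define B where "B = {y. cf_digit 1 y = d (Suc N)}"
  have BM[measurable]: "B \<in> sets borel" unfolding B_def by measurable
  have AN: "A N = {x \<in> G. D N x \<in> S}" unfolding A_def S_def using D_nth by auto
  define AB where "AB = {x \<in> G. D N x \<in> S \<and> (gauss_map ^^ N) x \<in> B}"
  have AB2: "AB = A N \<inter> {x. cf_digit (Suc N) x = d (Suc N)}"
    unfolding AB_def AN B_def using cf_digit_T[of N] by auto
  have AS: "A (Suc N) = A N - AB" unfolding AB2 A_def using mN by (auto simp: less_Suc_eq)
  have AM[measurable]: "A N \<in> sets borel" unfolding A_def by measurable
  have ABM[measurable]: "AB \<in> sets borel" unfolding AB2 by measurable
  have sub: "A N \<subseteq> {0<..<1}" unfolding A_def using G_sub by auto
  have "measure lborel (A (Suc N)) = measure lborel (A N) - measure lborel AB"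
    unfolding AS by (rule measure_Diff) (use fin[OF sub] AB2 in auto)
  moreover have "measure lborel ({0<..<1} \<inter> B) * measure lborel (A N) \<le> 4 * measure lborel AB"
    unfolding AB_def AN by (rule Kreal(2)) measurable
  moreover have "1/(2*real (d (Suc N))^2) \<le> measure lborel ({0<..<1} \<inter> B)"
    unfolding B_def by (rule Bd_bounds(1)[OF dp])
  moreover have "0 \<le> measure lborel (A N)" by simp
  ultimately have u1: "1/(2*real (d (Suc N))^2) * measure lborel (A N) \<le> 4 * measure lborel AB"
    by (meson mult_right_mono order.trans)
  define u where "u = 1/(2*real (d (Suc N))^2) * measure lborel (A N)"
  have u2: "measure lborel (A N) * (1 - 1/(8*real (d (Suc N))^2)) = measure lborel (A N) - u / 4"
    unfolding u_def by (simp add: field_simps)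
  have u3: "u \<le> 4 * measure lborel AB" using u1 unfolding u_def .
  show ?thesis using \<open>measure lborel (A (Suc N)) = _\<close> u2 u3 by linarith
qed


lemma A_exp:
  fixes d :: "nat \<Rightarrow> nat" and m N :: nat
  assumes dp: "\<And>k. d (Suc k) \<ge> 1"
  defines "A \<equiv> \<lambda>N. {x \<in> G. \<forall>k\<in>{m..<N}. cf_digit (Suc k) x \<noteq> d (Suc k)}"
  shows "measure lborel (A N) \<le> exp (- (\<Sum>k\<in>{m..<N}. 1/(8*real (d (Suc k))^2)))"
proof (induction N)
  case 0
  have "A 0 \<subseteq> {0<..<1}" unfolding A_def using G_sub by auto
  then show ?case using meas_le1 by simp
next
  case (Suc N)
  show ?case
  proof (cases "m \<le> N")
    case False
    then have "A (Suc N) = A N" "{m..<Suc N} = {m..<N}" unfolding A_def by auto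
    then show ?thesis using Suc by simp
  next
    case True
    define a where "a = 1/(8*real (d (Suc N))^2)"
    define s where "s = (\<Sum>k\<in>{m..<N}. 1/(8*real (d (Suc k))^2))"
    have d1: "1 \<le> real (d (Suc N))" using dp[of N] by simp
    have "1 \<le> real (d (Suc N))^2" using d1 by (simp add: one_le_power)
    then have "1 \<le> 8 * real (d (Suc N))^2" by linarith
    then have a0: "0 \<le> a" "a \<le> 1" unfolding a_def by (auto simp: divide_le_eq_1)
    have "measure lborel (A (Suc N)) \<le> measure lborel (A N) * (1 - a)"
      unfolding A_def a_def by (rule step_bound[where d=d and N=N and m=m, OF dp[of N] True])
    also have "\<dots> \<le> exp (-s) * (1 - a)" using Suc a0 unfolding s_def by (intro mult_right_mono) auto
    also have "\<dots> \<le> exp (-s) * exp (-a)" using exp_ge_add_one_self[of "-a"] by (intro mult_left_mono) auto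
    also have "\<dots> = exp (- (\<Sum>k\<in>{m..<Suc N}. 1/(8*real (d (Suc k))^2)))"
      unfolding s_def a_def using True by (simp add: exp_add[symmetric])
    finally show ?thesis .
  qed
qed


lemma Cnull:
  fixes d :: "nat \<Rightarrow> nat" and m :: nat
  assumes dp: "\<And>k. d (Suc k) \<ge> 1" and ns: "\<not> summable (\<lambda>n. 1 / (real (d (Suc n)))^2)"
  shows "{x \<in> G. \<forall>k\<ge>m. cf_digit (Suc k) x \<noteq> d (Suc k)} \<in> null_sets lborel"
proof -
  define C where "C = {x \<in> G. \<forall>k\<ge>m. cf_digit (Suc k) x \<noteq> d (Suc k)}"
  define A where "A = (\<lambda>N. {x \<in> G. \<forall>k\<in>{m..<N}. cf_digit (Suc k) x \<noteq> d (Suc k)})"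
  define a where "a = (\<lambda>k. 1/(8*real (d (Suc k))^2))"
  have CM[measurable]: "C \<in> sets borel" unfolding C_def by measurable
  have a0: "0 \<le> a k" for k unfolding a_def by simp
  have nsa: "\<not> summable a"
  proof
    assume "summable a"
    then have "summable (\<lambda>k. 8 * a k)" by (rule summable_mult)
    then show False using ns unfolding a_def by simp
  qed
  have unb: "\<exists>N. sum a {..<N} > t" for t
  proof (rule ccontr)
    assume "\<not> ?thesis"
    then have "sum a {..<N} \<le> t" for N by (simp add: not_less)
    then have "summable a" using a0 by (intro summableI_nonneg_bounded) auto
    then show False using nsa by simp
  qed
  have CA: "measure lborel C \<le> measure lborel (A N)" for N
    by (rule meas_mono01) (use G_sub in \<open>auto simp: C_def A_def\<close>)
  have bnd: "measure lborel C \<le> 1/t" if t: "t > 0" for t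
  proof -
    obtain N where N: "sum a {..<N} > sum a {..<m} + t" using unb by blast
    have mN: "m \<le> N"
    proof (rule ccontr)
      assume "\<not> m \<le> N"
      then have "sum a {..<N} \<le> sum a {..<m}" using a0 by (intro sum_mono2) auto
      then show False using N t by linarith
    qed
    have "{..<N} = {..<m} \<union> {m..<N}" using mN by auto
    then have sN: "sum a {..<N} = sum a {..<m} + sum a {m..<N}"
      by (simp add: sum.union_disjoint ivl_disj_int)
    have "measure lborel C \<le> exp (- sum a {m..<N})"
      using CA[of N] A_exp[of d m N, OF dp] unfolding A_def a_def by simp
    also have "\<dots> \<le> exp (-t)" using N sN by simp
    also have "\<dots> = 1 / exp t" by (simp add: exp_minus field_simps)
    also have "\<dots> \<le> 1 / t"
    proof -
      have "t \<le> exp t" using exp_ge_add_one_self[of t] by linarith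
      then show ?thesis using t by (intro divide_left_mono) auto
    qed
    finally show ?thesis .
  qed
  have m0: "measure lborel C = 0"
  proof (rule ccontr)
    assume "measure lborel C \<noteq> 0"
    then have p: "measure lborel C > 0" using measure_nonneg[of lborel C] by linarith
    have "measure lborel C \<le> 1/(2/measure lborel C)" using bnd[of "2/measure lborel C"] p by simp
    then show False using p by simp
  qed
  have "emeasure lborel C = 0" using fin[of C] m0 G_sub unfolding C_def by auto
  then show ?thesis unfolding C_def[symmetric] by (intro null_setsI) auto
qed

theorem theorem2p1:
  fixes d :: "nat \<Rightarrow> nat"
  assumes "\<forall>n\<ge>1. prime (d n)"
  shows "{x \<in> {0<..1}. infinite {n. n \<ge> 1 \<and> prime_digit n x = d n}} \<in> sets lborel
    \<and> measure lborel {x \<in> {0<..1}. infinite {n. n \<ge> 1 \<and> prime_digit n x = d n}}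
        = (if summable (\<lambda>n. 1 / (real (d (Suc n)))^2) then 0 else 1)"
proof -
  define X where "X = {x \<in> {0<..1::real}. infinite {n. n \<ge> 1 \<and> prime_digit n x = d n}}"
  have pd: "prime_digit n x = d n \<longleftrightarrow> cf_digit n x = d n" if "n \<ge> 1" for n x
    using assms that unfolding prime_digit_def by (auto simp: not_prime_0)
  have dp: "d (Suc k) \<ge> 1" for k using assms prime_ge_1_nat[of "d (Suc k)"] by auto
  have Xeq: "X = {x \<in> {0<..1}. \<forall>m. \<exists>n\<ge>m. n \<ge> 1 \<and> cf_digit n x = d n}"
  proof -
    have "{n. n \<ge> 1 \<and> prime_digit n x = d n} = {n. n \<ge> 1 \<and> cf_digit n x = d n}" for x
      using pd by blast
    then show ?thesis unfolding X_def by (simp add: infinite_nat_iff_unbounded_le)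
  qed
  have XM[measurable]: "X \<in> sets borel" unfolding Xeq by measurable
  have mX: "measure lborel X = (if summable (\<lambda>n. 1 / (real (d (Suc n)))^2) then 0 else 1)"
  proof (cases "summable (\<lambda>n. 1 / (real (d (Suc n)))^2)")
    case True
    define F where "F k = {x \<in> G. cf_digit (Suc k) x = d (Suc k)}" for k
    have FM[measurable]: "F k \<in> sets lborel" for k unfolding F_def by measurable
    have Fsub: "F k \<subseteq> {0<..<1}" for k unfolding F_def using G_sub by auto
    have Fb: "measure lborel (F k) \<le> 4 * (1 / (real (d (Suc k)))^2)" for k
    proof -
      have "measure lborel (F k) \<le> 4 * measure lborel ({0<..<1} \<inter> {y. cf_digit 1 y = d (Suc k)}) * measure lborel {x \<in> G. D k x \<in> UNIV}"
        unfolding F_def Fset_eq by (rule Kreal(1)) measurable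
      also have "\<dots> \<le> 4 * (1 / (real (d (Suc k)))^2) * 1"
      proof -
        have b: "4 * measure lborel ({0<..<1} \<inter> {y. cf_digit 1 y = d (Suc k)}) \<le> 4 * (1 / (real (d (Suc k)))^2)"
          using Bd_bounds(2)[OF dp[of k]] by linarith
        have g: "measure lborel {x \<in> G. D k x \<in> UNIV} \<le> 1"
          by (rule meas_le1) (use G_sub in blast)
        show ?thesis by (rule mult_mono[OF b g]) simp_all
      qed
      finally show ?thesis by simp
    qed
    have LN: "limsup F \<in> null_sets lborel"
    proof (rule borel_cantelli_limsup1)
      show "F k \<in> sets lborel" for k by (rule FM)
      show "emeasure lborel (F k) < \<infinity>" for k using fin[OF Fsub[of k]] by simp
      show "summable (\<lambda>k. measure lborel (F k))"
        by (rule summable_comparison_test'[OF summable_mult[OF True, of 4]]) (use Fb in auto)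
    qed
    have XS: "X \<subseteq> ({0<..1} - G) \<union> limsup F"
    proof
      fix x assume x: "x \<in> X"
      show "x \<in> ({0<..1} - G) \<union> limsup F"
      proof (cases "x \<in> G")
        case True
        have "x \<in> (\<Union>k\<in>{n..}. F k)" for n
        proof -
          obtain N where N: "N \<ge> Suc n" "cf_digit N x = d N" using x unfolding Xeq by blast
          then obtain k where "N = Suc k" "k \<ge> n" by (cases N) auto
          then show ?thesis using N True unfolding F_def by auto
        qed
        then show ?thesis unfolding limsup_INF_SUP by blast
      next
        case False then show ?thesis using x unfolding X_def by blast
      qed
    qed
    have "X \<in> null_sets lborel"
      by (rule null_sets_subset[OF null_sets.Un[OF G_null LN] _ XS]) simp
    then have "measure lborel X = 0" by (simp add: measure_def null_setsD1)
    then show ?thesis using True by simp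
  next
    case False
    define C where "C m = {x \<in> G. \<forall>k\<ge>m. cf_digit (Suc k) x \<noteq> d (Suc k)}" for m
    have Cn: "C m \<in> null_sets lborel" for m unfolding C_def by (rule Cnull[OF dp False])
    have sub: "{0<..1} - X \<subseteq> ({0<..1} - G) \<union> (\<Union>m. C m)"
    proof
      fix x assume x: "x \<in> {0<..1} - X"
      show "x \<in> ({0<..1} - G) \<union> (\<Union>m. C m)"
      proof (cases "x \<in> G")
        case True
        have nx: "\<not> (\<forall>m. \<exists>n\<ge>m. n \<ge> 1 \<and> cf_digit n x = d n)" using x unfolding Xeq by blast
        then obtain m where m: "\<forall>n\<ge>m. n \<ge> 1 \<longrightarrow> cf_digit n x \<noteq> d n" by blast
        have "x \<in> C m" unfolding C_def using True m by simp
        then show ?thesis by auto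
      next
        case False then show ?thesis using x by auto
      qed
    qed
    have NX: "{0<..1} - X \<in> null_sets lborel"
      by (rule null_sets_subset[OF null_sets.Un[OF G_null null_sets_UN[OF Cn]] _ sub]) simp
    have "measure lborel ({0<..1} - ({0<..1} - X)) = measure lborel {0<..1::real}"
      by (rule measure_Diff_null_set[OF _ NX]) simp
    moreover have "X \<subseteq> {0<..1}" unfolding X_def by blast
    then have "{0<..1} - ({0<..1} - X) = X" by blast
    ultimately have "measure lborel X = 1" by simp
    then show ?thesis using False by simp
  qed
  have "X \<in> sets lborel" using XM by simp
  then show ?thesis using mX unfolding X_def by blast
qed

end
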